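(* Let $n\ge 1$. The Zeckendorf game on $n$, starting from $\{F_1^n\}$, can be played to its end (the Zeckendorf decomposition of $n$) using only splitting moves and $C_1$ moves if and only if $n=F_k-1$ for some integer $k\ge 2$.
   Context: Fibonacci numbers are indexed by $F_1=1$, $F_2=2$, $F_{i+1}=F_i+F_{i-1}$. A game state is a finite multiset of Fibonacci numbers (tracked by index); $\{F_1^n\}$ denotes $n$ copies of $F_1$. The legal moves are: $C_1$: replace $F_1,F_1$ by $F_2$; for $i\ge 2$, $C_i$: replace $F_{i-1},F_i$ by $F_{i+1}$ (a "combining move"); $S_2$: replace $F_2,F_2$ by $F_1,F_3$; for $i\ge 3$, $S_i$: replace $F_i,F_i$ by $F_{i-2},F_{i+1}$ (a "splitting move"). The game on $n$ starts at $\{F_1^n\}$ and ends when no legal move is available, which happens exactly at the Zeckendorf decomposition of $n$ (the unique representation of $n$ as a sum of $F_i$'s with distinct, pairwise non-consecutive indices). *)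

theory Defs
  imports Main "HOL-Library.Multiset"
begin

text \<open>Fibonacci numbers with F 1 = 1, F 2 = 2, F (i+1) = F i + F (i-1).
  F 0 is never used (set to 0).\<close>
fun F :: "nat \<Rightarrow> nat" where
  "F 0 = 0"
| "F (Suc 0) = 1"
| "F (Suc (Suc 0)) = 2"
| "F (Suc (Suc (Suc i))) = F (Suc (Suc i)) + F (Suc i)"

text \<open>Game states: multisets of Fibonacci indices (index i stands for F i).\<close>
type_synonym state = "nat multiset"

definition combine :: "nat \<Rightarrow> state \<Rightarrow> state \<Rightarrow> bool" where
  "combine i M M' \<longleftrightarrow>
     (if i = 1 then {#1, 1#} \<subseteq># M \<and> M' = M - {#1, 1#} + {#2#}
      else 2 \<le> i \<and> {#i - 1, i#} \<subseteq># M \<and> M' = M - {#i - 1, i#} + {#i + 1#})"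

definition split_move :: "nat \<Rightarrow> state \<Rightarrow> state \<Rightarrow> bool" where
  "split_move i M M' \<longleftrightarrow>
     (if i = 2 then {#2, 2#} \<subseteq># M \<and> M' = M - {#2, 2#} + {#1, 3#}
      else 3 \<le> i \<and> {#i, i#} \<subseteq># M \<and> M' = M - {#i, i#} + {#i - 2, i + 1#})"

definition legal_move :: "state \<Rightarrow> state \<Rightarrow> bool" where
  "legal_move M M' \<longleftrightarrow> (\<exists>i. combine i M M') \<or> (\<exists>i. split_move i M M')"

definition split_C1_move :: "state \<Rightarrow> state \<Rightarrow> bool" where
  "split_C1_move M M' \<longleftrightarrow> combine 1 M M' \<or> (\<exists>i. split_move i M M')"

definition game_over :: "state \<Rightarrow> bool" where
  "game_over M \<longleftrightarrow> \<not> (\<exists>M'. legal_move M M')"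

end

theory Submission
  imports Defs
begin

abbreviation R where "R \<equiv> split_C1_move"

lemma F_rec: "2 \<le> i \<Longrightarrow> F (Suc i) = F i + F (i - 1)"
proof -
  assume "2 \<le> i"
  then obtain t where "i = Suc (Suc t)" by (metis add_2_eq_Suc le_Suc_ex)
  then show ?thesis by (cases t) auto
qed

lemma F_step: "F i \<le> F (Suc i)"
  by (induction i rule: F.induct) auto

lemma F_mono: "i \<le> j \<Longrightarrow> F i \<le> F j"
  by (induction j rule: dec_induct) (auto intro: le_trans F_step)

lemma F_pos: "1 \<le> i \<Longrightarrow> 1 \<le> F i"
  using F_mono[of 1 i] by simp

lemma F_le1: "j \<le> 2 \<Longrightarrow> F (j - 1) \<le> 1"
  by (cases j; cases "j - 1") auto

lemma pair_sub: "{#a, b#} \<subseteq># M \<longleftrightarrow> (if a = b then 2 \<le> count M a else a \<in># M \<and> b \<in># M)"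
  by (auto simp: insert_subset_eq_iff in_diff_count intro: count_inI)

lemma sub_decomp: "A \<subseteq># M \<Longrightarrow> \<exists>N. M = N + A"
  by (metis add.commute mset_subset_eq_exists_conv)

lemma mv_C1: "R (N + {#1,1#}) (N + {#2#})"
  unfolding split_C1_move_def combine_def by simp

lemma mv_S2: "R (N + {#2,2#}) (N + {#1,3#})"
  unfolding split_C1_move_def split_move_def
  by (rule disjI2, rule exI[of _ 2]) simp

lemma mv_S: "3 \<le> i \<Longrightarrow> R (N + {#i,i#}) (N + {#i-2, i+1#})"
  unfolding split_C1_move_def split_move_def
  by (rule disjI2, rule exI[of _ i]) simp

lemma R_cases:
  assumes "R M M'"
  shows "(\<exists>N. M = N + {#1,1#} \<and> M' = N + {#2#}) \<or> (\<exists>N. M = N + {#2,2#} \<and> M' = N + {#1,3#})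
     \<or> (\<exists>N i. 3 \<le> i \<and> M = N + {#i,i#} \<and> M' = N + {#i-2,i+1#})"
proof -
  from assms consider "combine 1 M M'" | i where "split_move i M M'"
    unfolding split_C1_move_def by blast
  then show ?thesis
  proof cases
    case 1
    then have "{#1,1#} \<subseteq># M" "M' = M - {#1,1#} + {#2#}" unfolding combine_def by auto
    then obtain N where "M = N + {#1,1#}" using sub_decomp by blast
    then show ?thesis using \<open>M' = _\<close> by auto
  next
    case (2 i)
    show ?thesis
    proof (cases "i = 2")
      case True
      then have "{#2,2#} \<subseteq># M" "M' = M - {#2,2#} + {#1,3#}" using 2 unfolding split_move_def by auto
      then obtain N where "M = N + {#2,2#}" using sub_decomp by blast
      then show ?thesis using \<open>M' = _\<close> by auto
    next
      case False
      then have "3 \<le> i" "{#i,i#} \<subseteq># M" "M' = M - {#i,i#} + {#i-2,i+1#}" using 2 unfolding split_move_def by auto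
      then obtain N where "M = N + {#i,i#}" using sub_decomp by blast
      then have "M' = N + {#i-2,i+1#}" using \<open>M' = _\<close> by simp
      then show ?thesis using \<open>M = _\<close> \<open>3 \<le> i\<close> by blast
    qed
  qed
qed

lemma R_add: "R M M' \<Longrightarrow> R (M + K) (M' + K)"
proof -
  assume "R M M'"
  from R_cases[OF this] show ?thesis
  proof (elim disjE exE conjE)
    fix N assume "M = N + {#1,1#}" "M' = N + {#2#}"
    then show ?thesis using mv_C1[of "N + K"] by (simp add: ac_simps)
  next
    fix N assume "M = N + {#2,2#}" "M' = N + {#1,3#}"
    then show ?thesis using mv_S2[of "N + K"] by (simp add: ac_simps)
  next
    fix N i assume "3 \<le> i" "M = N + {#i,i#}" "M' = N + {#i-2,i+1#}"
    then show ?thesis using mv_S[of i "N + K"] by (simp add: ac_simps)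
  qed
qed

lemma R_lift: "R\<^sup>*\<^sup>* M M' \<Longrightarrow> R\<^sup>*\<^sup>* (M + K) (M' + K)"
  by (induction rule: rtranclp_induct) (auto intro: rtranclp.rtrancl_into_rtrancl R_add)

definition val :: "nat multiset \<Rightarrow> nat" where "val M = (\<Sum>x\<in>#M. F x)"
definition below :: "nat multiset \<Rightarrow> nat \<Rightarrow> nat" where "below M j = val (filter_mset (\<lambda>x. x < j) M)"
definition Inv where "Inv M \<longleftrightarrow> 0 \<notin># M \<and> (\<forall>i\<in>#M. \<forall>j\<le>i. F (j - 1) \<le> below M j + 1)"

lemma val_simps[simp]: "val {#} = 0" "val (add_mset a A) = F a + val A" "val (A + B) = val A + val B"
  by (auto simp: val_def)

lemma below_simps[simp]: "below {#} j = 0" "below (add_mset a A) j = (if a < j then F a else 0) + below A j"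
  "below (A + B) j = below A j + below B j"
  by (auto simp: below_def)

lemma below_mono: "j \<le> j' \<Longrightarrow> below M j \<le> below M j'"
  by (induction M) auto

lemma R_val: "R M M' \<Longrightarrow> val M' = val M"
proof -
  assume "R M M'"
  from R_cases[OF this] show ?thesis
  proof (elim disjE exE conjE)
    fix N i assume "3 \<le> i" "M = N + {#i,i#}" "M' = N + {#i-2,i+1#}"
    moreover have "F (i+1) = F i + F (i-1)" using F_rec[of i] \<open>3 \<le> i\<close> by simp
    moreover have "F i = F (i-1) + F (i-2)"
    proof -
      obtain t where "i = Suc (Suc (Suc t))" using \<open>3 \<le> i\<close> by (metis Suc_le_D numeral_3_eq_3 Suc_le_mono)
      then show ?thesis by simp
    qed
    ultimately show ?thesis by simp
  qed (auto simp: eval_nat_numeral)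
qed

lemma F_sub: "3 \<le> i \<Longrightarrow> F i = F (i-1) + F (i-2)"
proof -
  assume "3 \<le> i"
  then obtain t where "i = Suc (Suc (Suc t))" by (metis Suc_le_D numeral_3_eq_3 Suc_le_mono)
  then show ?thesis by simp
qed

lemma Inv_C1: "Inv (N + {#1,1#}) \<Longrightarrow> Inv (N + {#2#})"
  unfolding Inv_def
proof (intro conjI ballI allI impI)
  assume H: "0 \<notin># N + {#1, 1#} \<and> (\<forall>i\<in>#N + {#1, 1#}. \<forall>j\<le>i. F (j - 1) \<le> below (N + {#1, 1#}) j + 1)"
  then show "0 \<notin># N + {#2#}" by auto
  fix k j assume k: "k \<in># N + {#2#}" and jk: "j \<le> k"
  show "F (j - 1) \<le> below (N + {#2#}) j + 1"
  proof (cases "j \<le> 2")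
    case True then show ?thesis using F_le1[of j] by simp
  next
    case False
    then have "k \<in># N" using k jk by auto
    then have "F (j - 1) \<le> below (N + {#1, 1#}) j + 1" using H jk by auto
    then show ?thesis using False by (simp add: eval_nat_numeral)
  qed
qed

lemma Inv_S2: "Inv (N + {#2,2#}) \<Longrightarrow> Inv (N + {#1,3#})"
  unfolding Inv_def
proof (intro conjI ballI allI impI)
  assume H: "0 \<notin># N + {#2, 2#} \<and> (\<forall>i\<in>#N + {#2, 2#}. \<forall>j\<le>i. F (j - 1) \<le> below (N + {#2, 2#}) j + 1)"
  then show "0 \<notin># N + {#1,3#}" by auto
  fix k j assume k: "k \<in># N + {#1,3#}" and jk: "j \<le> k"
  show "F (j - 1) \<le> below (N + {#1,3#}) j + 1"
  proof (cases "j \<le> 3")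
    case True
    then consider "j \<le> 2" | "j = 3" by linarith
    then show ?thesis
    proof cases
      case 1 then show ?thesis using F_le1[of j] by simp
    next
      case 2 then show ?thesis by (simp add: eval_nat_numeral)
    qed
  next
    case False
    then have "k \<in># N" using k jk by auto
    then have "F (j - 1) \<le> below (N + {#2, 2#}) j + 1" using H jk by auto
    then show ?thesis using False by (simp add: eval_nat_numeral)
  qed
qed

lemma Inv_S: "3 \<le> i \<Longrightarrow> Inv (N + {#i,i#}) \<Longrightarrow> Inv (N + {#i-2,i+1#})"
  unfolding Inv_def
proof (intro conjI ballI allI impI)
  assume i3: "3 \<le> i"
  assume H: "0 \<notin># N + {#i, i#} \<and> (\<forall>i'\<in>#N + {#i, i#}. \<forall>j\<le>i'. F (j - 1) \<le> below (N + {#i, i#}) j + 1)"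
  then show "0 \<notin># N + {#i-2,i+1#}" using i3 by auto
  have Hi: "\<And>j. j \<le> i \<Longrightarrow> F (j - 1) \<le> below (N + {#i, i#}) j + 1" using H by auto
  have f1: "F (i+1) = F i + F (i-1)" using F_rec[of i] i3 by simp
  have f2: "F i = F (i-1) + F (i-2)" using F_sub i3 by simp
  fix k j assume k: "k \<in># N + {#i-2,i+1#}" and jk: "j \<le> k"
  consider "j \<le> i" | "j = i + 1" | "i + 1 < j" by linarith
  then show "F (j - 1) \<le> below (N + {#i-2,i+1#}) j + 1"
  proof cases
    case 1
    then have "F (j - 1) \<le> below (N + {#i, i#}) j + 1" using Hi by auto
    then show ?thesis using 1 by auto
  next
    case 2
    have "F (i - 1) \<le> below (N + {#i, i#}) i + 1" using Hi by auto
    moreover have "below N i \<le> below N (i+1)" by (rule below_mono) simp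
    ultimately show ?thesis using 2 i3 f2 by auto
  next
    case 3
    then have "k \<in># N" using k jk by auto
    then have "F (j - 1) \<le> below (N + {#i, i#}) j + 1" using H jk by auto
    then show ?thesis using 3 f1 f2 by auto
  qed
qed

lemma R_Inv: "R M M' \<Longrightarrow> Inv M \<Longrightarrow> Inv M'"
  using R_cases Inv_C1 Inv_S2 Inv_S by blast

lemma reach_inv: "R\<^sup>*\<^sup>* (replicate_mset n 1) M \<Longrightarrow> Inv M \<and> val M = n"
proof (induction rule: rtranclp_induct)
  case base
  have "val (replicate_mset n 1) = n" by (induction n) auto
  moreover have "Inv (replicate_mset n 1)" unfolding Inv_def
    by (auto simp: F_le1)
  ultimately show ?case by simp
next
  case (step y z)
  then show ?case using R_Inv R_val by metis
qed

lemma game_over_props: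
  assumes go: "game_over M" and z: "0 \<notin># M"
  shows "count M x \<le> 1" "\<not> (i \<in># M \<and> Suc i \<in># M)"
proof -
  show "count M x \<le> 1"
  proof (rule ccontr)
    assume "\<not> count M x \<le> 1"
    then have c: "2 \<le> count M x" by simp
    then have "x \<in># M" by (auto intro: count_inI)
    then have "x \<noteq> 0" using z by (cases x) auto
    then consider "x = 1" | "x = 2" | "3 \<le> x" by linarith
    then show False
    proof cases
      case 1
      then have "combine 1 M (M - {#1,1#} + {#2#})" using c unfolding combine_def by (simp add: pair_sub)
      then show False using go unfolding game_over_def legal_move_def by blast
    next
      case 2
      then have "split_move 2 M (M - {#2,2#} + {#1,3#})" using c unfolding split_move_def by (simp add: pair_sub)
      then show False using go unfolding game_over_def legal_move_def by blast
    next
      case 3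
      then have "split_move x M (M - {#x,x#} + {#x-2,x+1#})" using c unfolding split_move_def by (simp add: pair_sub)
      then show False using go unfolding game_over_def legal_move_def by blast
    qed
  qed
  show "\<not> (i \<in># M \<and> Suc i \<in># M)"
  proof
    assume h: "i \<in># M \<and> Suc i \<in># M"
    have "i \<noteq> 0"
    proof
      assume "i = 0" then show False using h z by simp
    qed
    then have "combine (Suc i) M (M - {#i, Suc i#} + {#Suc i + 1#})" using h unfolding combine_def
      by (simp add: pair_sub)
    then show False using go unfolding game_over_def legal_move_def by blast
  qed
qed

lemma game_over_intro:
  assumes "\<And>x. count M x \<le> 1" "\<And>i. \<not> (i \<in># M \<and> Suc i \<in># M)"
  shows "game_over M"
  unfolding game_over_def legal_move_def
proof (intro notI, elim exE disjE)
  fix M' i assume "combine i M M'"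
  show False
  proof (cases "i = 1")
    case True
    then show False using \<open>combine i M M'\<close> assms(1)[of 1] unfolding combine_def by (simp add: pair_sub)
  next
    case False
    then have "2 \<le> i" "i - 1 \<in># M" "i \<in># M" using \<open>combine i M M'\<close> unfolding combine_def
      by (auto simp: pair_sub split: if_splits)
    then show False using assms(2)[of "i - 1"] by simp
  qed
next
  fix M' i assume "split_move i M M'"
  then have "2 \<le> count M i" unfolding split_move_def by (auto simp: pair_sub split: if_splits)
  then show False using assms(1)[of i] by simp
qed

lemma zeck_bound:
  "\<forall>M. (\<forall>x\<in>#M. 1 \<le> x \<and> x \<le> m) \<longrightarrow> (\<forall>x. count M x \<le> 1) \<longrightarrow> (\<forall>i. \<not> (i \<in># M \<and> Suc i \<in># M))
      \<longrightarrow> val M + 1 \<le> F (Suc m)"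
proof (induction m rule: less_induct)
  case (less m)
  show ?case
  proof (intro allI impI)
    fix M assume b: "\<forall>x\<in>#M. 1 \<le> x \<and> x \<le> m" and c: "\<forall>x. count M x \<le> 1"
      and nc: "\<forall>i. \<not> (i \<in># M \<and> Suc i \<in># M)"
    show "val M + 1 \<le> F (Suc m)"
    proof (cases "m \<in># M")
      case True
      then obtain M1 where M1: "M = add_mset m M1" by (metis multi_member_split)
      have "m \<notin># M1" 
      proof
        assume "m \<in># M1"
        then have "count M1 m \<noteq> 0" by (metis not_in_iff)
        moreover have "count M m = Suc (count M1 m)" using M1 by simp
        ultimately show False using c[rule_format, of m] by linarith
      qed
      moreover have "m - 1 \<notin># M1"
      proof
        assume "m - 1 \<in># M1"
        moreover have "1 \<le> m" using b True by auto
        ultimately have "m - 1 \<in># M" "Suc (m - 1) \<in># M" using M1 True by auto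
        then show False using nc by blast
      qed
      ultimately have b1: "\<forall>x\<in>#M1. 1 \<le> x \<and> x \<le> m - 2"
      proof (intro ballI)
        fix x assume "m \<notin># M1" "m - 1 \<notin># M1" "x \<in># M1"
        then have "x \<in># M" using M1 by simp
        then have "1 \<le> x" "x \<le> m" using b by auto
        moreover have "x \<noteq> m" "x \<noteq> m - 1" using \<open>m \<notin># M1\<close> \<open>m - 1 \<notin># M1\<close> \<open>x \<in># M1\<close> by auto
        ultimately show "1 \<le> x \<and> x \<le> m - 2" by linarith
      qed
      have m1: "1 \<le> m" using b True by auto
      have c1: "\<forall>x. count M1 x \<le> 1" proof
        fix x show "count M1 x \<le> 1" using c[rule_format, of x] M1 by (auto split: if_splits)
      qed
      have nc1: "\<forall>i. \<not> (i \<in># M1 \<and> Suc i \<in># M1)"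
      proof
        fix i show "\<not> (i \<in># M1 \<and> Suc i \<in># M1)" using nc[rule_format, of i] M1 by auto
      qed
      have "m - 2 < m" using m1 by simp
      have "val M1 + 1 \<le> F (Suc (m - 2))" using less[OF \<open>m - 2 < m\<close>] b1 c1 nc1 by blast
      moreover have "F m + F (Suc (m - 2)) \<le> F (Suc m)"
      proof (cases "m = 1")
        case True then show ?thesis by simp
      next
        case False
        then have "2 \<le> m" using m1 by simp
        then have "Suc (m - 2) = m - 1" by simp
        then show ?thesis using F_rec[of m] \<open>2 \<le> m\<close> by simp
      qed
      ultimately show ?thesis using M1 by simp
    next
      case False
      show ?thesis
      proof (cases "m = 0")
        case True
        have "M = {#}"
        proof (rule ccontr)
          assume "M \<noteq> {#}"
          then obtain x where "x \<in># M" by blast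
          then show False using b True by force
        qed
        then show ?thesis using True by simp
      next
        case m0: False
        have "\<forall>x\<in>#M. 1 \<le> x \<and> x \<le> m - 1" 
        proof
          fix x assume "x \<in># M" then have "1 \<le> x" "x \<le> m" "x \<noteq> m" using b False by auto
          then show "1 \<le> x \<and> x \<le> m - 1" by linarith
        qed
        moreover have "m - 1 < m" using m0 by simp
        ultimately have "val M + 1 \<le> F (Suc (m - 1))" using less[OF \<open>m - 1 < m\<close>] c nc by blast
        then show ?thesis using m0 F_step[of m] by simp
      qed
    qed
  qed
qed

fun Z :: "nat \<Rightarrow> nat multiset" where
  "Z 0 = {#}"
| "Z (Suc 0) = {#1#}"
| "Z (Suc (Suc j)) = add_mset (Suc (Suc j)) (Z j)"

lemma count_Z: "count (Z j) x = (if 1 \<le> x \<and> x \<le> j \<and> even (j - x) then 1 else 0)"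
proof (induction j rule: Z.induct)
  case (3 j)
  consider "x \<le> j" | "x = Suc j" | "x = Suc (Suc j)" | "Suc (Suc j) < x" by linarith
  then show ?case
  proof cases
    case 1 then show ?thesis using 3 by (simp add: Suc_diff_le)
  qed (use 3 in auto)
qed auto

lemma rep_plus: "replicate_mset (a + b) x = replicate_mset a x + replicate_mset b x"
  by (induction a) auto

lemma L_lemma: "1 \<le> j \<Longrightarrow> R\<^sup>*\<^sup>* (add_mset j (Z j)) (Z (Suc j))"
proof (induction j rule: Z.induct)
  case 1 then show ?case by simp
next
  case 2
  have "R ({#} + {#1,1#}) ({#} + {#2#})" by (rule mv_C1)
  then show ?case by (simp add: eval_nat_numeral)
next
  case (3 t)
  show ?case
  proof (cases "t = 0")
    case True
    have "R ({#} + {#2,2#}) ({#} + {#1,3#})" by (rule mv_S2)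
    then show ?thesis using True by (simp add: eval_nat_numeral add_mset_commute)
  next
    case False
    have s1: "R (Z t + {#Suc (Suc t), Suc (Suc t)#}) (Z t + {#Suc (Suc t) - 2, Suc (Suc t) + 1#})"
      using False by (intro mv_S) simp
    have ih: "R\<^sup>*\<^sup>* (add_mset t (Z t)) (Z (Suc t))" using 3 False by simp
    have s2: "R\<^sup>*\<^sup>* (add_mset t (Z t) + {#Suc (Suc (Suc t))#}) (Z (Suc t) + {#Suc (Suc (Suc t))#})"
      by (rule R_lift[OF ih])
    have e: "Z t + {#Suc (Suc t) - 2, Suc (Suc t) + 1#} = add_mset t (Z t) + {#Suc (Suc (Suc t))#}" by simp
    have "R\<^sup>*\<^sup>* (Z t + {#Suc (Suc t), Suc (Suc t)#}) (Z (Suc t) + {#Suc (Suc (Suc t))#})"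
      using s1 s2 unfolding e by (rule converse_rtranclp_into_rtranclp)
    then show ?thesis by (simp add: add_mset_commute)
  qed
qed

lemma Q_lemma: "1 \<le> j \<Longrightarrow> R\<^sup>*\<^sup>* (Z j + replicate_mset (F j) 1) (Z (Suc j))"
proof (induction j rule: less_induct)
  case (less j)
  consider "j = 1" | "j = 2" | t where "j = Suc (Suc t)" "1 \<le> t"
    using less.prems by (metis One_nat_def Suc_le_D le_SucE le_antisym nat.exhaust not_less_eq_eq numeral_2_eq_2)
  then show ?case
  proof cases
    case 1
    have "R ({#} + {#1,1#}) ({#} + {#2#})" by (rule mv_C1)
    then show ?thesis using 1 by (simp add: eval_nat_numeral)
  next
    case 2
    have a: "R ({#2#} + {#1,1#}) ({#2#} + {#2#})" by (rule mv_C1)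
    have b: "R ({#} + {#2,2#}) ({#} + {#1,3#})" by (rule mv_S2)
    have "R\<^sup>*\<^sup>* ({#2#} + {#1,1#}) ({#} + {#1,3#})"
      using a b by (simp add: r_into_rtranclp converse_rtranclp_into_rtranclp)
    then show ?thesis using 2 by (simp add: eval_nat_numeral add_mset_commute)
  next
    case 3
    have fj: "F j = F (Suc t) + F t" using 3 F_rec[of "Suc t"] by simp
    have st1: "R\<^sup>*\<^sup>* (Z t + replicate_mset (F t) 1) (Z (Suc t))" using less.IH[of t] 3 by simp
    have st2: "R\<^sup>*\<^sup>* (Z (Suc t) + replicate_mset (F (Suc t)) 1) (Z (Suc (Suc t)))" using less.IH[of "Suc t"] 3 by simp
    have st3: "R\<^sup>*\<^sup>* (add_mset j (Z j)) (Z (Suc j))" by (rule L_lemma) (simp add: 3)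
    have e1: "Z j + replicate_mset (F j) 1 = (Z t + replicate_mset (F t) 1) + (add_mset j (replicate_mset (F (Suc t)) 1))"
      using 3 fj by (simp add: rep_plus ac_simps)
    have e2: "Z (Suc t) + add_mset j (replicate_mset (F (Suc t)) 1) = (Z (Suc t) + replicate_mset (F (Suc t)) 1) + {#j#}"
      by (simp add: ac_simps)
    have e3: "Z (Suc (Suc t)) + {#j#} = add_mset j (Z j)" using 3 by simp
    have "R\<^sup>*\<^sup>* (Z j + replicate_mset (F j) 1) (Z (Suc t) + add_mset j (replicate_mset (F (Suc t)) 1))"
      unfolding e1 by (rule R_lift[OF st1])
    also have "R\<^sup>*\<^sup>* (Z (Suc t) + add_mset j (replicate_mset (F (Suc t)) 1)) (add_mset j (Z j))"
      unfolding e2 e3[symmetric] by (rule R_lift[OF st2])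
    also note st3
    finally show ?thesis .
  qed
qed

lemma P_lemma: "1 \<le> j \<Longrightarrow> R\<^sup>*\<^sup>* (replicate_mset (F (Suc j) - 1) 1) (Z j)"
proof (induction j rule: dec_induct)
  case base then show ?case by simp
next
  case (step j)
  have "F (Suc (Suc j)) - 1 = (F (Suc j) - 1) + F j"
    using F_rec[of "Suc j"] step(1) F_pos[of "Suc j"] by simp
  then have e: "replicate_mset (F (Suc (Suc j)) - 1) 1 = replicate_mset (F (Suc j) - 1) 1 + replicate_mset (F j) 1"
    by (simp add: rep_plus)
  have "R\<^sup>*\<^sup>* (replicate_mset (F (Suc (Suc j)) - 1) 1) (Z j + replicate_mset (F j) 1)"
    unfolding e by (rule R_lift[OF step(3)])
  also have "R\<^sup>*\<^sup>* (Z j + replicate_mset (F j) 1) (Z (Suc j))" using Q_lemma step(1) by simp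
  finally show ?case .
qed

lemma Z_game_over: "game_over (Z j)"
proof (rule game_over_intro)
  fix x show "count (Z j) x \<le> 1" by (simp add: count_Z)
next
  fix i show "\<not> (i \<in># Z j \<and> Suc i \<in># Z j)"
    by (auto simp: count_Z simp flip: count_greater_zero_iff split: if_splits)
qed

theorem theorem1p3:
  fixes n :: nat
  assumes "n \<ge> 1"
  shows "(\<exists>M. split_C1_move\<^sup>*\<^sup>* (replicate_mset n 1) M \<and> game_over M)
         \<longleftrightarrow> (\<exists>k::nat. k \<ge> 2 \<and> n = F k - 1)"
proof
  assume "\<exists>M. split_C1_move\<^sup>*\<^sup>* (replicate_mset n 1) M \<and> game_over M"
  then obtain M where r: "R\<^sup>*\<^sup>* (replicate_mset n 1) M" and go: "game_over M" by blast
  from reach_inv[OF r] have inv: "Inv M" and vM: "val M = n" by auto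
  have z: "0 \<notin># M" using inv unfolding Inv_def by simp
  have c: "\<forall>x. count M x \<le> 1" using game_over_props(1)[OF go z] by blast
  have nc: "\<forall>i. \<not> (i \<in># M \<and> Suc i \<in># M)" using game_over_props(2)[OF go z] by blast
  have ne: "M \<noteq> {#}" using vM assms by auto
  define m where "m = Max_mset M"
  have mM: "m \<in># M" using ne unfolding m_def by simp
  have le: "\<forall>x\<in>#M. x \<le> m" unfolding m_def by simp
  have m1: "1 \<le> m" using mM z by (cases m) auto
  have b: "\<forall>x\<in>#M. 1 \<le> x \<and> x \<le> m"
  proof
    fix x assume "x \<in># M" then show "1 \<le> x \<and> x \<le> m" using le z by (cases x) auto
  qed
  have zb: "val M + 1 \<le> F (Suc m)" using zeck_bound b c nc by blast
  obtain M1 where M1: "M = add_mset m M1" using mM by (metis multi_member_split)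
  have "m \<notin># M1"
  proof
    assume "m \<in># M1"
    then have "count M1 m \<noteq> 0" by (metis not_in_iff)
    moreover have "count M m = Suc (count M1 m)" using M1 by simp
    ultimately show False using c[rule_format, of m] by linarith
  qed
  have lt: "\<forall>x\<in>#M1. x < m"
  proof
    fix x assume x: "x \<in># M1"
    then have "x \<in># M" using M1 by simp
    then have "x \<le> m" using le by blast
    moreover have "x \<noteq> m" using x \<open>m \<notin># M1\<close> by blast
    ultimately show "x < m" by simp
  qed
  have bel: "\<And>A. (\<forall>x\<in>#A. x < m) \<Longrightarrow> below A m = val A"
  proof -
    fix A :: "nat multiset" show "(\<forall>x\<in>#A. x < m) \<Longrightarrow> below A m = val A"
      by (induction A) auto
  qed
  have "F (m - 1) \<le> below M m + 1" using inv mM unfolding Inv_def by blast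
  then have hi: "F (m - 1) \<le> val M1 + 1" using M1 bel[OF lt] by simp
  have nv: "n = F m + val M1" using vM M1 by simp
  have "F (Suc m) \<le> n + 1"
  proof (cases "m = 1")
    case True then show ?thesis using assms by simp
  next
    case False
    then have "2 \<le> m" using m1 by simp
    then show ?thesis using F_rec[of m] hi nv by simp
  qed
  then have "n = F (Suc m) - 1" using zb vM by simp
  then show "\<exists>k::nat. k \<ge> 2 \<and> n = F k - 1" using m1 by (intro exI[of _ "Suc m"]) simp
next
  assume "\<exists>k::nat. k \<ge> 2 \<and> n = F k - 1"
  then obtain k where k2: "k \<ge> 2" and nk: "n = F k - 1" by blast
  obtain j where kj: "k = Suc j" and j1: "1 \<le> j" using k2 by (cases k) auto
  have "R\<^sup>*\<^sup>* (replicate_mset n 1) (Z j)" using P_lemma[OF j1] nk kj by simp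
  then show "\<exists>M. split_C1_move\<^sup>*\<^sup>* (replicate_mset n 1) M \<and> game_over M"
    using Z_game_over by blast
qed

end
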